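(* Let $A$ be a unitarizable Hopf $*$-algebra and $Z$ an $A$-$*$-Galois extension. Any positive Haar measure on $Z$ is faithful, i.e. $\mu(z^*z)>0$ for all $z\neq 0$.
   Context: Base field $\mathbb C$. A Hopf $*$-algebra is a Hopf algebra that is a $*$-algebra with $\Delta$ a $*$-homomorphism; it is unitarizable if every finite-dimensional right comodule $V$ admits a scalar product $\phi_V:\overline V\otimes V\to\mathbb C$ which is a comodule map ($\overline V$ the conjugate comodule, $\overline v\mapsto\sum\overline{v_i}\otimes a_i^*$ if $\alpha_V(v)=\sum v_i\otimes a_i$). An $A$-$*$-Galois extension is a nonzero $*$-algebra $Z$ with a left coaction $\alpha_Z:Z\to A\otimes Z$ that is a $*$-homomorphism and with $(1_A\otimes m_Z)(\alpha_Z\otimes1_Z):Z\otimes Z\to A\otimes Z$ bijective. A Haar measure on $Z$ is a linear $\mu:Z\to\mathbb C$ with $(1_A\otimes\mu)\alpha_Z=\mu(\cdot)1_A$ and $\mu(1)=1$; positive if $\mu(z^*z)\ge0$ for all $z$. *)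

theory Defs
  imports Complex_Main "HOL-Library.Complex_Order"
begin

class cvec = ab_group_add +
  fixes cscale :: "complex \<Rightarrow> 'a \<Rightarrow> 'a"
  assumes cscale_add_right: "cscale a (x + y) = cscale a x + cscale a y"
    and cscale_add_left: "cscale (a + b) x = cscale a x + cscale b x"
    and cscale_cscale: "cscale a (cscale b x) = cscale (a * b) x"
    and cscale_one: "cscale 1 x = x"

class calg = cvec + ring_1 +
  assumes cscale_mult_left: "cscale a x * y = cscale a (x * y)"
    and cscale_mult_right: "x * cscale a y = cscale a (x * y)"

class cstar_alg = calg +
  fixes cstar :: "'a \<Rightarrow> 'a"
  assumes cstar_cstar: "cstar (cstar x) = x"
    and cstar_add: "cstar (x + y) = cstar x + cstar y"
    and cstar_cscale: "cstar (cscale a x) = cscale (cnj a) (cstar x)"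
    and cstar_mult: "cstar (x * y) = cstar y * cstar x"

instantiation complex :: cstar_alg
begin
definition cscale_complex :: "complex \<Rightarrow> complex \<Rightarrow> complex" where
  "cscale_complex a x = a * x"
definition cstar_complex :: "complex \<Rightarrow> complex" where
  "cstar_complex x = cnj x"
instance
  by standard (auto simp: cscale_complex_def cstar_complex_def algebra_simps)
end

definition clinear :: "('a::cvec \<Rightarrow> 'b::cvec) \<Rightarrow> bool" where
  "clinear f \<longleftrightarrow> (\<forall>x y. f (x + y) = f x + f y) \<and> (\<forall>c x. f (cscale c x) = cscale c (f x))"

definition cindep :: "nat \<Rightarrow> (nat \<Rightarrow> 'a::cvec) \<Rightarrow> bool" where
  "cindep n v \<longleftrightarrow> (\<forall>c. (\<Sum>i<n. cscale (c i) (v i)) = 0 \<longrightarrow> (\<forall>i<n. c i = 0))"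

text \<open>t : X \<times> Y \<rightarrow> T exhibits T as the algebraic tensor product of X and Y:
  t is bilinear, its image spans T, and a sum of t (x i) (y i) with linearly
  independent y i vanishes only if all x i vanish.\<close>
definition is_tensor :: "('a::cvec \<Rightarrow> 'b::cvec \<Rightarrow> 'c::cvec) \<Rightarrow> bool" where
  "is_tensor t \<longleftrightarrow>
     (\<forall>y. clinear (\<lambda>x. t x y)) \<and> (\<forall>x. clinear (t x)) \<and>
     (\<forall>w. \<exists>(n::nat) x y. w = (\<Sum>i<n. t (x i) (y i))) \<and>
     (\<forall>(n::nat) x y. cindep n y \<and> (\<Sum>i<n. t (x i) (y i)) = 0 \<longrightarrow> (\<forall>i<n. x i = 0))"

definition lin_ext :: "('a \<Rightarrow> 'b \<Rightarrow> 'c::cvec) \<Rightarrow> ('a \<Rightarrow> 'b \<Rightarrow> 'd::cvec) \<Rightarrow> ('c \<Rightarrow> 'd) \<Rightarrow> bool" where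
  "lin_ext t f h \<longleftrightarrow> clinear h \<and> (\<forall>x y. h (t x y) = f x y)"

definition tensor_algebra :: "('a::cstar_alg \<Rightarrow> 'b::cstar_alg \<Rightarrow> 'c::cstar_alg) \<Rightarrow> bool" where
  "tensor_algebra t \<longleftrightarrow> is_tensor t \<and> t 1 1 = 1 \<and>
     (\<forall>a b c d. t a b * t c d = t (a * c) (b * d)) \<and>
     (\<forall>a b. cstar (t a b) = t (cstar a) (cstar b))"

definition star_hom :: "('a::cstar_alg \<Rightarrow> 'b::cstar_alg) \<Rightarrow> bool" where
  "star_hom f \<longleftrightarrow> clinear f \<and> f 1 = 1 \<and> (\<forall>x y. f (x * y) = f x * f y) \<and>
     (\<forall>x. f (cstar x) = cstar (f x))"

text \<open>tAA : A \<times> A \<rightarrow> A\<otimes>A, tAAA : (A\<otimes>A) \<times> A \<rightarrow> (A\<otimes>A)\<otimes>A; D comultiplication,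
  e counit, S antipode.\<close>
definition hopf_star_algebra ::
  "('a::cstar_alg \<Rightarrow> 'a \<Rightarrow> 'aa::cstar_alg) \<Rightarrow> ('aa \<Rightarrow> 'a \<Rightarrow> 'aaa::cvec) \<Rightarrow>
   ('a \<Rightarrow> 'aa) \<Rightarrow> ('a \<Rightarrow> complex) \<Rightarrow> ('a \<Rightarrow> 'a) \<Rightarrow> bool" where
  "hopf_star_algebra tAA tAAA D e S \<longleftrightarrow>
     tensor_algebra tAA \<and> is_tensor tAAA \<and>
     star_hom D \<and>
     clinear e \<and> e 1 = 1 \<and> (\<forall>x y. e (x * y) = e x * e y) \<and>
     clinear S \<and>
     (\<forall>D1 D2 L. lin_ext tAA (\<lambda>x y. tAAA (D x) y) D1 \<and>
                (\<forall>x. lin_ext tAA (\<lambda>p q. tAAA (tAA x p) q) (L x)) \<and>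
                lin_ext tAA (\<lambda>x y. L x (D y)) D2
                \<longrightarrow> (\<forall>a. D1 (D a) = D2 (D a))) \<and>
     (\<forall>h. lin_ext tAA (\<lambda>x y. cscale (e x) y) h \<longrightarrow> (\<forall>a. h (D a) = a)) \<and>
     (\<forall>h. lin_ext tAA (\<lambda>x y. cscale (e y) x) h \<longrightarrow> (\<forall>a. h (D a) = a)) \<and>
     (\<forall>h. lin_ext tAA (\<lambda>x y. S x * y) h \<longrightarrow> (\<forall>a. h (D a) = cscale (e a) 1)) \<and>
     (\<forall>h. lin_ext tAA (\<lambda>x y. x * S y) h \<longrightarrow> (\<forall>a. h (D a) = cscale (e a) 1))"

text \<open>A right comodule structure on C^n, written in the standard basis:
  e_j \<mapsto> \<Sum>i. e_i \<otimes> u i j.  Every finite-dimensional right comodule is of this form.\<close>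
definition right_corep ::
  "('a::cstar_alg \<Rightarrow> 'a \<Rightarrow> 'aa::cstar_alg) \<Rightarrow> ('a \<Rightarrow> 'aa) \<Rightarrow> ('a \<Rightarrow> complex) \<Rightarrow>
   nat \<Rightarrow> (nat \<Rightarrow> nat \<Rightarrow> 'a) \<Rightarrow> bool" where
  "right_corep tAA D e n u \<longleftrightarrow>
     (\<forall>k<n. \<forall>j<n. D (u k j) = (\<Sum>i<n. tAA (u k i) (u i j))) \<and>
     (\<forall>i<n. \<forall>j<n. e (u i j) = (if i = j then 1 else 0))"

text \<open>F k l = phi(conj(e_k) \<otimes> e_l): phi is a scalar product (Hermitian, positive definite)
  and a comodule map conj(V) \<otimes> V \<rightarrow> C.\<close>
definition invariant_scalar_product :: "nat \<Rightarrow> (nat \<Rightarrow> nat \<Rightarrow> 'a::cstar_alg) \<Rightarrow> (nat \<Rightarrow> nat \<Rightarrow> complex) \<Rightarrow> bool" where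
  "invariant_scalar_product n u F \<longleftrightarrow>
     (\<forall>k<n. \<forall>l<n. F l k = cnj (F k l)) \<and>
     (\<forall>c. (\<exists>i<n. c i \<noteq> 0) \<longrightarrow> 0 < (\<Sum>k<n. \<Sum>l<n. cnj (c k) * F k l * c l)) \<and>
     (\<forall>k<n. \<forall>l<n. (\<Sum>i<n. \<Sum>j<n. cscale (F i j) (cstar (u i k) * u j l)) = cscale (F k l) 1)"

definition unitarizable ::
  "('a::cstar_alg \<Rightarrow> 'a \<Rightarrow> 'aa::cstar_alg) \<Rightarrow> ('a \<Rightarrow> 'aa) \<Rightarrow> ('a \<Rightarrow> complex) \<Rightarrow> bool" where
  "unitarizable tAA D e \<longleftrightarrow>
     (\<forall>n u. right_corep tAA D e n u \<longrightarrow> (\<exists>F. invariant_scalar_product n u F))"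

text \<open>tAZ : A \<times> Z \<rightarrow> A\<otimes>Z, tAAZ : (A\<otimes>A) \<times> Z \<rightarrow> (A\<otimes>A)\<otimes>Z, tZZ : Z \<times> Z \<rightarrow> Z\<otimes>Z,
  al the left coaction.  Z is nonzero since cstar_alg includes 0 \<noteq> 1.\<close>
definition galois_ext ::
  "('a::cstar_alg \<Rightarrow> 'a \<Rightarrow> 'aa::cstar_alg) \<Rightarrow> ('a \<Rightarrow> 'aa) \<Rightarrow> ('a \<Rightarrow> complex) \<Rightarrow>
   ('a \<Rightarrow> 'z::cstar_alg \<Rightarrow> 'az::cstar_alg) \<Rightarrow> ('aa \<Rightarrow> 'z \<Rightarrow> 'aaz::cvec) \<Rightarrow>
   ('z \<Rightarrow> 'z \<Rightarrow> 'zz::cvec) \<Rightarrow> ('z \<Rightarrow> 'az) \<Rightarrow> bool" where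
  "galois_ext tAA D e tAZ tAAZ tZZ al \<longleftrightarrow>
     tensor_algebra tAZ \<and> is_tensor tAAZ \<and> is_tensor tZZ \<and>
     star_hom al \<and>
     (\<forall>D1 D2 M. lin_ext tAZ (\<lambda>a z. tAAZ (D a) z) D1 \<and>
                (\<forall>a. lin_ext tAZ (\<lambda>b w. tAAZ (tAA a b) w) (M a)) \<and>
                lin_ext tAZ (\<lambda>a z. M a (al z)) D2
                \<longrightarrow> (\<forall>z. D1 (al z) = D2 (al z))) \<and>
     (\<forall>h. lin_ext tAZ (\<lambda>a z. cscale (e a) z) h \<longrightarrow> (\<forall>z. h (al z) = z)) \<and>
     (\<exists>beta R. (\<forall>w. lin_ext tAZ (\<lambda>a z. tAZ a (z * w)) (R w)) \<and>
               lin_ext tZZ (\<lambda>z w. R w (al z)) beta \<and> bij beta)"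

definition haar_measure ::
  "('a::cstar_alg \<Rightarrow> 'z::cstar_alg \<Rightarrow> 'az::cstar_alg) \<Rightarrow> ('z \<Rightarrow> 'az) \<Rightarrow> ('z \<Rightarrow> complex) \<Rightarrow> bool" where
  "haar_measure tAZ al mu \<longleftrightarrow> clinear mu \<and> mu 1 = 1 \<and>
     (\<forall>h. lin_ext tAZ (\<lambda>a z. cscale (mu z) a) h \<longrightarrow> (\<forall>z. h (al z) = cscale (mu z) 1))"

definition positive_functional :: "('z::cstar_alg \<Rightarrow> complex) \<Rightarrow> bool" where
  "positive_functional mu \<longleftrightarrow> (\<forall>z. 0 \<le> mu (cstar z * z))"

definition faithful_functional :: "('z::cstar_alg \<Rightarrow> complex) \<Rightarrow> bool" where
  "faithful_functional mu \<longleftrightarrow> (\<forall>z. z \<noteq> 0 \<longrightarrow> 0 < mu (cstar z * z))"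

end

theory Submission
  imports Defs
begin

lemma cs_complex:
  fixes \<alpha> \<beta> \<gamma> :: complex
  assumes H: "\<And>s. 0 \<le> cnj s * s * \<alpha> + cnj s * \<beta> + s * \<gamma>"
  shows "\<beta> = 0"
proof -
  have h1: "0 \<le> \<alpha> + \<beta> + \<gamma>" using H[of 1] by simp
  have h2: "0 \<le> \<alpha> - \<beta> - \<gamma>" using H[of "-1"] by simp
  have h3: "0 \<le> \<alpha> - \<i> * \<beta> + \<i> * \<gamma>" using H[of "\<i>"] by simp
  have ia: "Im \<alpha> = 0" and ra: "Re \<alpha> \<ge> 0" and ibg: "Im \<beta> + Im \<gamma> = 0" and rbg: "Re \<gamma> = Re \<beta>"
    using h1 h2 h3 by (auto simp: less_eq_complex_def)
  define r where "r = 1 / (Re \<alpha> + 1)"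
  have rpos: "r > 0" using ra by (simp add: r_def)
  have rle: "r * Re \<alpha> \<le> 1" using ra by (simp add: r_def field_simps)
  note h4 = H[of "- (complex_of_real r) * \<beta>"]
  define N where "N = (Re \<beta>)^2 + (Im \<beta>)^2"
  have "0 \<le> r * r * N * Re \<alpha> - 2 * r * N"
  proof -
    have ig: "Im \<gamma> = - Im \<beta>" using ibg by simp
    show ?thesis using h4 ia ig rbg by (simp add: less_eq_complex_def N_def algebra_simps power2_eq_square)
  qed
  hence "0 \<le> r * (r * Re \<alpha> * N - 2 * N)" by (simp add: algebra_simps)
  hence "0 \<le> r * Re \<alpha> * N - 2 * N" using rpos by (simp add: zero_le_mult_iff)
  moreover have "r * Re \<alpha> * N \<le> N"
  proof -
    have "N \<ge> 0" unfolding N_def by simp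
    thus ?thesis using rle mult_right_mono[OF rle, of N] by simp
  qed
  ultimately have "N \<le> 0" by linarith
  hence "N = 0" unfolding N_def by (simp add: add_nonneg_eq_0_iff sum_power2_le_zero_iff)
  thus ?thesis unfolding N_def by (simp add: complex_eq_iff)
qed


lemma cscale_zero_right[simp]: "cscale a (0::'a::cvec) = 0"
proof -
  have "cscale a (0::'a) = cscale a 0 + cscale a 0" by (metis add.right_neutral cscale_add_right)
  thus ?thesis by simp
qed

lemma cscale_zero_left[simp]: "cscale 0 (x::'a::cvec) = 0"
proof -
  have "cscale 0 x = cscale 0 x + cscale 0 x" by (metis add.right_neutral cscale_add_left)
  thus ?thesis by simp
qed

lemma cscale_minus_right: "cscale a (- (x::'a::cvec)) = - cscale a x"
  by (metis add.inverse_unique cscale_add_right cscale_zero_right add.right_inverse)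

lemma cscale_minus_left: "cscale (- a) (x::'a::cvec) = - cscale a x"
  by (metis add.inverse_unique cscale_add_left cscale_zero_left add.right_inverse)

lemma cscale_sum_right: "cscale a (\<Sum>i\<in>I. f i) = (\<Sum>i\<in>I. cscale a (f i::'a::cvec))"
  by (induction I rule: infinite_finite_induct) (auto simp: cscale_add_right)

lemma cscale_sum_left: "cscale (\<Sum>i\<in>I. f i) (x::'a::cvec) = (\<Sum>i\<in>I. cscale (f i) x)"
  by (induction I rule: infinite_finite_induct) (auto simp: cscale_add_left)

lemma clinear_add: "clinear f \<Longrightarrow> f (x + y) = f x + f y"
  by (simp add: clinear_def)
lemma clinear_cscale: "clinear f \<Longrightarrow> f (cscale c x) = cscale c (f x)"
  by (simp add: clinear_def)
lemma clinear_zero: "clinear f \<Longrightarrow> f 0 = 0"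
  by (metis cscale_zero_left clinear_cscale)
lemma clinear_minus: "clinear f \<Longrightarrow> f (- x) = - f x"
  by (metis add.inverse_unique add.right_inverse clinear_add clinear_zero)
lemma clinear_sum: "clinear f \<Longrightarrow> f (\<Sum>i\<in>I. g i) = (\<Sum>i\<in>I. f (g i))"
  by (induction I rule: infinite_finite_induct) (auto simp: clinear_zero clinear_add)

lemma clinear_id: "clinear (\<lambda>x. x)" by (simp add: clinear_def)
lemma clinear_comp: "clinear f \<Longrightarrow> clinear g \<Longrightarrow> clinear (\<lambda>x. f (g x))"
  by (simp add: clinear_def)
lemma clinear_zero_fun: "clinear (\<lambda>x. 0::'b::cvec)" by (simp add: clinear_def)

lemma complex_cscale[simp]: "cscale a (b::complex) = a * b"
  by (simp add: cscale_complex_def)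

lemma calg_cscale_one: "cscale a (1::'a::calg) * x = cscale a x"
  by (simp add: cscale_mult_left)

section \<open>Bases of finite families\<close>

lemma basis_exists:
  fixes y :: "nat \<Rightarrow> 'a::cvec"
  shows "\<exists>m b c. cindep m b \<and> (\<forall>i<n. y i = (\<Sum>j<m. cscale (c i j) (b j)))"
proof (induction n)
  case 0
  show ?case by (rule exI[of _ 0]) (simp add: cindep_def)
next
  case (Suc n)
  then obtain m b c where ind: "cindep m b" and rep: "\<forall>i<n. y i = (\<Sum>j<m. cscale (c i j) (b j))"
    by blast
  show ?case
  proof (cases "\<exists>d. y n = (\<Sum>j<m. cscale (d j) (b j))")
    case True
    then obtain d where d: "y n = (\<Sum>j<m. cscale (d j) (b j))" by blast
    show ?thesis
      apply (rule exI[of _ m], rule exI[of _ b], rule exI[of _ "\<lambda>i. if i = n then d else c i"])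
      using ind rep d by (auto simp: less_Suc_eq)
  next
    case False
    define b' where "b' = b(m := y n)"
    define c' where "c' = (\<lambda>i j. if i = n then (if j = m then 1 else 0) else (if j = m then 0 else c i j))"
    have ind': "cindep (Suc m) b'"
      unfolding cindep_def
    proof (intro allI impI)
      fix cc :: "nat \<Rightarrow> complex" and i
      assume s: "(\<Sum>i<Suc m. cscale (cc i) (b' i)) = 0" and i: "i < Suc m"
      have s2: "(\<Sum>j<m. cscale (cc j) (b j)) + cscale (cc m) (y n) = 0"
        using s by (simp add: b'_def)
      have ccm: "cc m = 0"
      proof (rule ccontr)
        assume nz: "cc m \<noteq> 0"
        have "cscale (cc m) (y n) = - (\<Sum>j<m. cscale (cc j) (b j))" using s2
          by (simp add: add.commute add_eq_0_iff)
        hence "cscale (inverse (cc m)) (cscale (cc m) (y n)) = cscale (inverse (cc m)) (- (\<Sum>j<m. cscale (cc j) (b j)))"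
          by simp
        hence "y n = (\<Sum>j<m. cscale (- inverse (cc m) * cc j) (b j))"
          using nz by (simp add: cscale_cscale cscale_one cscale_minus_right cscale_sum_right
              cscale_minus_left sum_negf)
        hence "\<exists>d. y n = (\<Sum>j<m. cscale (d j) (b j))" by (rule exI[where x="\<lambda>j. - inverse (cc m) * cc j"])
        thus False using False by simp
      qed
      have "(\<Sum>j<m. cscale (cc j) (b j)) = 0" using s2 ccm by simp
      hence "\<forall>j<m. cc j = 0" using ind by (simp add: cindep_def)
      thus "cc i = 0" using i ccm by (auto simp: less_Suc_eq)
    qed
    have rep': "\<forall>i<Suc n. y i = (\<Sum>j<Suc m. cscale (c' i j) (b' j))"
    proof (intro allI impI)
      fix i assume i: "i < Suc n"
      show "y i = (\<Sum>j<Suc m. cscale (c' i j) (b' j))"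
      proof (cases "i = n")
        case True
        then show ?thesis by (simp add: c'_def b'_def cscale_one)
      next
        case False
        hence "i < n" using i by simp
        moreover have "(\<Sum>j<m. cscale (c' i j) (b' j)) = (\<Sum>j<m. cscale (c i j) (b j))"
          by (rule sum.cong) (auto simp: c'_def b'_def False)
        ultimately show ?thesis using rep False by (simp add: c'_def)
      qed
    qed
    show ?thesis using ind' rep' by blast
  qed
qed


definition bilin :: "('a::cvec \<Rightarrow> 'b::cvec \<Rightarrow> 'c::cvec) \<Rightarrow> bool" where
  "bilin f \<longleftrightarrow> (\<forall>y. clinear (\<lambda>x. f x y)) \<and> (\<forall>x. clinear (f x))"

lemma tensor_bilin: "is_tensor t \<Longrightarrow> bilin t"
  by (simp add: is_tensor_def bilin_def)

lemma bilin_sum_left: "bilin f \<Longrightarrow> f (\<Sum>i\<in>I. g i) y = (\<Sum>i\<in>I. f (g i) y)"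
  unfolding bilin_def using clinear_sum[of "\<lambda>x. f x y"] by blast
lemma bilin_sum_right: "bilin f \<Longrightarrow> f x (\<Sum>i\<in>I. g i) = (\<Sum>i\<in>I. f x (g i))"
  unfolding bilin_def using clinear_sum[of "f x"] by blast
lemma bilin_cscale_left: "bilin f \<Longrightarrow> f (cscale c x) y = cscale c (f x y)"
  unfolding bilin_def using clinear_cscale[of "\<lambda>x. f x y"] by blast
lemma bilin_cscale_right: "bilin f \<Longrightarrow> f x (cscale c y) = cscale c (f x y)"
  unfolding bilin_def using clinear_cscale[of "f x"] by blast
lemma bilin_zero_left: "bilin f \<Longrightarrow> f 0 y = 0"
  unfolding bilin_def using clinear_zero[of "\<lambda>x. f x y"] by blast
lemma bilin_add_left: "bilin f \<Longrightarrow> f (x + x') y = f x y + f x' y"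
  unfolding bilin_def using clinear_add[of "\<lambda>x. f x y"] by blast
lemma bilin_minus_left: "bilin f \<Longrightarrow> f (- x) y = - f x y"
  unfolding bilin_def using clinear_minus[of "\<lambda>x. f x y"] by blast

lemma tensor_span: "is_tensor t \<Longrightarrow> \<exists>n x y. w = (\<Sum>i<(n::nat). t (x i) (y i))"
  unfolding is_tensor_def by blast

lemma tensor_indep: "is_tensor t \<Longrightarrow> cindep (n::nat) y \<Longrightarrow> (\<Sum>i<n. t (x i) (y i)) = 0 \<Longrightarrow> \<forall>i<n. x i = 0"
  unfolding is_tensor_def by blast

lemma rebase_right:
  assumes f: "bilin f" and rep: "\<forall>i<(n::nat). y i = (\<Sum>j<m. cscale (c i j) (b j))"
  shows "(\<Sum>i<n. f (x i) (y i)) = (\<Sum>j<m. f (\<Sum>i<n. cscale (c i j) (x i)) (b j))"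
proof -
  have "(\<Sum>i<n. f (x i) (y i)) = (\<Sum>i<n. \<Sum>j<m. cscale (c i j) (f (x i) (b j)))"
    using rep by (simp add: bilin_sum_right[OF f] bilin_cscale_right[OF f])
  also have "\<dots> = (\<Sum>j<m. \<Sum>i<n. cscale (c i j) (f (x i) (b j)))" by (rule sum.swap)
  also have "\<dots> = (\<Sum>j<m. f (\<Sum>i<n. cscale (c i j) (x i)) (b j))"
    by (simp add: bilin_sum_left[OF f] bilin_cscale_left[OF f])
  finally show ?thesis .
qed

lemma rebase_left:
  assumes f: "bilin f" and rep: "\<forall>i<(n::nat). x i = (\<Sum>j<m. cscale (c i j) (b j))"
  shows "(\<Sum>i<n. f (x i) (y i)) = (\<Sum>j<m. f (b j) (\<Sum>i<n. cscale (c i j) (y i)))"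
proof -
  have "(\<Sum>i<n. f (x i) (y i)) = (\<Sum>i<n. \<Sum>j<m. cscale (c i j) (f (b j) (y i)))"
    using rep by (simp add: bilin_sum_left[OF f] bilin_cscale_left[OF f])
  also have "\<dots> = (\<Sum>j<m. \<Sum>i<n. cscale (c i j) (f (b j) (y i)))" by (rule sum.swap)
  also have "\<dots> = (\<Sum>j<m. f (b j) (\<Sum>i<n. cscale (c i j) (y i)))"
    by (simp add: bilin_sum_right[OF f] bilin_cscale_right[OF f])
  finally show ?thesis .
qed

lemma tensor_rep_indep_left:
  assumes t: "is_tensor t"
  shows "\<exists>m b z. cindep m b \<and> w = (\<Sum>j<(m::nat). t (b j) (z j))"
proof -
  obtain n x y where w: "w = (\<Sum>i<(n::nat). t (x i) (y i))" using tensor_span[OF t] by blast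
  obtain m b c where ind: "cindep m b" and rep: "\<forall>i<n. x i = (\<Sum>j<m. cscale (c i j) (b j))"
    using basis_exists by blast
  show ?thesis
    apply (rule exI[of _ m], rule exI[of _ b], rule exI[of _ "\<lambda>j. \<Sum>i<n. cscale (c i j) (y i)"])
    using rebase_left[OF tensor_bilin[OF t] rep, of y] w ind by simp
qed

lemma tensor_zero_imp:
  assumes t: "is_tensor t" and f: "bilin f" and z: "(\<Sum>i<(n::nat). t (x i) (y i)) = 0"
  shows "(\<Sum>i<n. f (x i) (y i)) = 0"
proof -
  obtain m b c where ind: "cindep m b" and rep: "\<forall>i<n. y i = (\<Sum>j<m. cscale (c i j) (b j))"
    using basis_exists by blast
  have "(\<Sum>j<m. t (\<Sum>i<n. cscale (c i j) (x i)) (b j)) = 0"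
    using z rebase_right[OF tensor_bilin[OF t] rep, of x] by simp
  hence zz: "\<forall>j<m. (\<Sum>i<n. cscale (c i j) (x i)) = 0"
    using tensor_indep[OF t ind, of "\<lambda>j. \<Sum>i<n. cscale (c i j) (x i)"] by simp
  have "(\<Sum>i<n. f (x i) (y i)) = (\<Sum>j<m. f (\<Sum>i<n. cscale (c i j) (x i)) (b j))"
    by (rule rebase_right[OF f rep])
  also have "\<dots> = 0" using zz by (simp add: bilin_zero_left[OF f])
  finally show ?thesis .
qed

lemma sum_concat: "(\<Sum>i<n + (n'::nat). F i) = (\<Sum>i<n. F i) + (\<Sum>i<n'. F (n + i))"
  by (induction n') (auto simp: add.assoc)

definition cat :: "nat \<Rightarrow> (nat \<Rightarrow> 'a) \<Rightarrow> (nat \<Rightarrow> 'a) \<Rightarrow> nat \<Rightarrow> 'a" where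
  "cat n x x' i = (if i < n then x i else x' (i - n))"

lemma sum_cat: "(\<Sum>i<n + (n'::nat). F (cat n x x' i) (cat n y y' i)) = (\<Sum>i<n. F (x i) (y i)) + (\<Sum>i<n'. F (x' i) (y' i))"
  unfolding sum_concat by (simp add: cat_def)

lemma tensor_welldef:
  assumes t: "is_tensor t" and f: "bilin f"
    and e: "(\<Sum>i<(n::nat). t (x i) (y i)) = (\<Sum>i<(n'::nat). t (x' i) (y' i))"
  shows "(\<Sum>i<n. f (x i) (y i)) = (\<Sum>i<n'. f (x' i) (y' i))"
proof -
  have "(\<Sum>i<n + n'. t (cat n x (\<lambda>i. - x' i) i) (cat n y y' i)) = 0"
    using e by (simp add: sum_cat bilin_minus_left[OF tensor_bilin[OF t]] sum_negf)
  hence "(\<Sum>i<n + n'. f (cat n x (\<lambda>i. - x' i) i) (cat n y y' i)) = 0"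
    by (rule tensor_zero_imp[OF t f])
  thus ?thesis by (simp add: sum_cat bilin_minus_left[OF f] sum_negf)
qed

lemma lin_ext_exists:
  fixes t :: "'a::cvec \<Rightarrow> 'b::cvec \<Rightarrow> 'c::cvec" and f :: "'a \<Rightarrow> 'b \<Rightarrow> 'd::cvec"
  assumes t: "is_tensor t" and f: "bilin f"
  shows "\<exists>h. lin_ext t f h"
proof -
  define h where "h w = (SOME v. \<exists>n x y. w = (\<Sum>i<(n::nat). t (x i) (y i)) \<and> v = (\<Sum>i<n. f (x i) (y i)))" for w
  have hv: "h (\<Sum>i<n. t (x i) (y i)) = (\<Sum>i<n. f (x i) (y i))" for n :: nat and x :: "nat \<Rightarrow> 'a" and y :: "nat \<Rightarrow> 'b"
  proof -
    let ?w = "\<Sum>i<n. t (x i) (y i)"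
    have "\<exists>v. \<exists>n x y. ?w = (\<Sum>i<(n::nat). t (x i) (y i)) \<and> v = (\<Sum>i<n. f (x i) (y i))" by blast
    hence "\<exists>n' x' y'. ?w = (\<Sum>i<(n'::nat). t (x' i) (y' i)) \<and> h ?w = (\<Sum>i<n'. f (x' i) (y' i))"
      unfolding h_def by (rule someI_ex)
    then obtain n' x' y' where e1: "?w = (\<Sum>i<(n'::nat). t (x' i) (y' i))" and e2: "h ?w = (\<Sum>i<n'. f (x' i) (y' i))"
      by blast
    have "(\<Sum>i<n. f (x i) (y i)) = (\<Sum>i<n'. f (x' i) (y' i))"
      by (rule tensor_welldef[OF t f e1])
    thus ?thesis using e2 by simp
  qed
  have "clinear h"
    unfolding clinear_def
  proof (intro conjI allI)
    fix w1 w2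
    obtain n x y where w1: "w1 = (\<Sum>i<(n::nat). t (x i) (y i))" using tensor_span[OF t] by blast
    obtain n' x' y' where w2: "w2 = (\<Sum>i<(n'::nat). t (x' i) (y' i))" using tensor_span[OF t] by blast
    have "w1 + w2 = (\<Sum>i<n + n'. t (cat n x x' i) (cat n y y' i))" using w1 w2 by (simp add: sum_cat)
    hence "h (w1 + w2) = (\<Sum>i<n + n'. f (cat n x x' i) (cat n y y' i))" using hv by simp
    also have "\<dots> = h w1 + h w2" using hv by (simp add: sum_cat w1 w2)
    finally show "h (w1 + w2) = h w1 + h w2" .
  next
    fix c w
    obtain n x y where w: "w = (\<Sum>i<(n::nat). t (x i) (y i))" using tensor_span[OF t] by blast
    have "cscale c w = (\<Sum>i<n. t (cscale c (x i)) (y i))"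
      using w by (simp add: cscale_sum_right bilin_cscale_left[OF tensor_bilin[OF t]])
    thus "h (cscale c w) = cscale c (h w)" using w hv
      by (simp add: cscale_sum_right bilin_cscale_left[OF f])
  qed
  moreover have "h (t x y) = f x y" for x y using hv[where n=1 and x="\<lambda>_. x" and y="\<lambda>_. y"] by simp
  ultimately show ?thesis unfolding lin_ext_def by blast
qed

lemma lin_ext_clinear: "lin_ext t f h \<Longrightarrow> clinear h" by (simp add: lin_ext_def)
lemma lin_ext_gen: "lin_ext t f h \<Longrightarrow> h (t x y) = f x y" by (simp add: lin_ext_def)

lemma lin_ext_sum:
  assumes "lin_ext t f h"
  shows "h (\<Sum>i\<in>I. t (x i) (y i)) = (\<Sum>i\<in>I. f (x i) (y i))"
proof -
  have "h (\<Sum>i\<in>I. t (x i) (y i)) = (\<Sum>i\<in>I. h (t (x i) (y i)))"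
    by (rule clinear_sum[OF lin_ext_clinear[OF assms]])
  thus ?thesis by (simp add: lin_ext_gen[OF assms])
qed


lemma tensor_unique:
  assumes t: "is_tensor t" and "clinear h1" "clinear h2" and "\<And>x y. h1 (t x y) = h2 (t x y)"
  shows "h1 w = h2 w"
proof -
  obtain n x y where w: "w = (\<Sum>i<(n::nat). t (x i) (y i))" using tensor_span[OF t] by blast
  show ?thesis unfolding w by (simp add: clinear_sum[OF assms(2)] clinear_sum[OF assms(3)] assms(4))
qed


lemma clinear_add_fun: "clinear f \<Longrightarrow> clinear g \<Longrightarrow> clinear (\<lambda>x. f x + g x)"
  by (simp add: clinear_def cscale_add_right)

lemma clinear_mult_right: "clinear (\<lambda>x::'a::calg. x * w)"
  by (simp add: clinear_def distrib_right cscale_mult_left)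

lemma clinear_mult_left: "clinear (\<lambda>x::'a::calg. w * x)"
  by (simp add: clinear_def distrib_left cscale_mult_right)

lemma clinear_sum_scal:
  assumes "\<And>k. clinear (g k :: 'a::cvec \<Rightarrow> complex)"
  shows "clinear (\<lambda>w. \<Sum>k<m. cscale (g k w) (b k :: 'b::cvec))"
  using assms
  by (simp add: clinear_def cscale_add_left sum.distrib cscale_sum_right cscale_cscale)

lemma bilin_scal_left: "clinear g \<Longrightarrow> bilin (\<lambda>x y. cscale (g x) (y::'b::cvec))"
  by (simp add: bilin_def clinear_def cscale_add_left cscale_add_right cscale_cscale mult.commute)

lemma bilin_scal_right: "clinear g \<Longrightarrow> bilin (\<lambda>x y. cscale (g y) (x::'b::cvec))"
  by (simp add: bilin_def clinear_def cscale_add_left cscale_add_right cscale_cscale mult.commute)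

lemma bilin_comp_left: "bilin f \<Longrightarrow> clinear g \<Longrightarrow> bilin (\<lambda>x y. f (g x) y)"
  by (simp add: bilin_def clinear_def)

lemma bilin_comp_right: "bilin f \<Longrightarrow> clinear g \<Longrightarrow> bilin (\<lambda>x y. f x (g y))"
  by (simp add: bilin_def clinear_def)

lemma bilin_mult: "clinear g \<Longrightarrow> clinear k \<Longrightarrow> bilin (\<lambda>x y. g x * (k y :: 'a::calg))"
  by (simp add: bilin_def clinear_def distrib_left distrib_right cscale_mult_left cscale_mult_right)

lemma cs_lemma:
  fixes mu :: "'z::cstar_alg \<Rightarrow> complex"
  assumes lin: "clinear mu" and pos: "\<And>z. 0 \<le> mu (cstar z * z)" and y: "mu (cstar y * y) = 0"
  shows "mu (p * y) = 0"
proof -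
  define x where "x = cstar p"
  have px: "cstar x = p" by (simp add: x_def cstar_cstar)
  have "\<And>s. 0 \<le> cnj s * s * mu (cstar x * x) + cnj s * mu (cstar x * y) + s * mu (cstar y * x)"
  proof -
    fix s
    have "cstar (cscale s x + y) * (cscale s x + y) =
      cscale (cnj s * s) (cstar x * x) + cscale (cnj s) (cstar x * y) + cscale s (cstar y * x) + cstar y * y"
      by (simp add: cstar_add cstar_cscale distrib_left distrib_right cscale_mult_left cscale_mult_right
          cscale_cscale cscale_add_right algebra_simps)
    hence "mu (cstar (cscale s x + y) * (cscale s x + y)) =
      cnj s * s * mu (cstar x * x) + cnj s * mu (cstar x * y) + s * mu (cstar y * x)"
      using y by (simp add: clinear_add[OF lin] clinear_cscale[OF lin])
    thus "0 \<le> cnj s * s * mu (cstar x * x) + cnj s * mu (cstar x * y) + s * mu (cstar y * x)"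
      using pos by metis
  qed
  hence "mu (cstar x * y) = 0" by (rule cs_complex)
  thus ?thesis using px by simp
qed


theorem corollary4p3p5:
  fixes tAA :: "'a::cstar_alg \<Rightarrow> 'a \<Rightarrow> 'aa::cstar_alg"
    and tAAA :: "'aa \<Rightarrow> 'a \<Rightarrow> 'aaa::cvec"
    and D :: "'a \<Rightarrow> 'aa" and e :: "'a \<Rightarrow> complex" and S :: "'a \<Rightarrow> 'a"
    and tAZ :: "'a \<Rightarrow> 'z::cstar_alg \<Rightarrow> 'az::cstar_alg"
    and tAAZ :: "'aa \<Rightarrow> 'z \<Rightarrow> 'aaz::cvec"
    and tZZ :: "'z \<Rightarrow> 'z \<Rightarrow> 'zz::cvec"
    and al :: "'z \<Rightarrow> 'az" and mu :: "'z \<Rightarrow> complex"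
  assumes "hopf_star_algebra tAA tAAA D e S"
    and "unitarizable tAA D e"
    and "galois_ext tAA D e tAZ tAAZ tZZ al"
    and "haar_measure tAZ al mu"
    and "positive_functional mu"
  shows "faithful_functional mu"
proof -
  have tAA: "is_tensor tAA" and Dlin: "clinear D" and elin: "clinear e" and Slin: "clinear S"
    and antipode: "\<And>h. lin_ext tAA (\<lambda>x y. S x * y) h \<Longrightarrow> \<forall>a. h (D a) = cscale (e a) 1"
    using assms(1) unfolding hopf_star_algebra_def tensor_algebra_def star_hom_def by blast+
  have tAZ: "is_tensor tAZ" and tAZmult: "\<And>a b c d. tAZ a b * tAZ c d = tAZ (a * c) (b * d)"
    and tAAZ: "is_tensor tAAZ" and tZZ: "is_tensor tZZ"
    and allin: "clinear al" and almult: "\<And>x y. al (x * y) = al x * al y"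
    and coassoc: "\<And>D1 D2 M. lin_ext tAZ (\<lambda>a z. tAAZ (D a) z) D1 \<Longrightarrow>
                (\<forall>a. lin_ext tAZ (\<lambda>b w. tAAZ (tAA a b) w) (M a)) \<Longrightarrow>
                lin_ext tAZ (\<lambda>a z. M a (al z)) D2 \<Longrightarrow> (\<forall>z. D1 (al z) = D2 (al z))"
    and counit: "\<And>h. lin_ext tAZ (\<lambda>a z. cscale (e a) z) h \<Longrightarrow> (\<forall>z. h (al z) = z)"
    and galois: "\<exists>beta R. (\<forall>w. lin_ext tAZ (\<lambda>a z. tAZ a (z * w)) (R w)) \<and>
               lin_ext tZZ (\<lambda>z w. R w (al z)) beta \<and> bij beta"
    using assms(3) unfolding galois_ext_def tensor_algebra_def star_hom_def by blast+
  have mulin: "clinear mu" and mu1: "mu 1 = 1"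
    and haar: "\<And>h. lin_ext tAZ (\<lambda>a z. cscale (mu z) a) h \<Longrightarrow> (\<forall>z. h (al z) = cscale (mu z) 1)"
    using assms(4) unfolding haar_measure_def by blast+
  have pos: "\<And>z. 0 \<le> mu (cstar z * z)" using assms(5) unfolding positive_functional_def by blast

  obtain H where H: "lin_ext tAA (\<lambda>x y. S x * y) H"
    using lin_ext_exists[OF tAA bilin_mult[OF Slin clinear_id]] by blast
  have HD: "\<And>a. H (D a) = cscale (e a) 1" using antipode[OF H] by blast
  obtain he where he: "lin_ext tAZ (\<lambda>a z. cscale (e a) z) he"
    using lin_ext_exists[OF tAZ bilin_scal_left[OF elin]] by blast
  have heal: "\<And>z. he (al z) = z" using counit[OF he] by blast
  obtain hm where hm: "lin_ext tAZ (\<lambda>a z. cscale (mu z) a) hm"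
    using lin_ext_exists[OF tAZ bilin_scal_right[OF mulin]] by blast
  have hmal: "\<And>z. hm (al z) = cscale (mu z) 1" using haar[OF hm] by blast
  obtain D1 where D1: "lin_ext tAZ (\<lambda>a z. tAAZ (D a) z) D1"
    using lin_ext_exists[OF tAZ bilin_comp_left[OF tensor_bilin[OF tAAZ] Dlin]] by blast
  have "\<forall>a. \<exists>Ma. lin_ext tAZ (\<lambda>b w. tAAZ (tAA a b) w) Ma"
  proof
    fix a
    have "clinear (tAA a)" using tAA unfolding is_tensor_def by blast
    thus "\<exists>Ma. lin_ext tAZ (\<lambda>b w. tAAZ (tAA a b) w) Ma"
      using lin_ext_exists[OF tAZ bilin_comp_left[OF tensor_bilin[OF tAAZ]]] by blast
  qed
  from choice[OF this] obtain M where M: "\<forall>a. lin_ext tAZ (\<lambda>b w. tAAZ (tAA a b) w) (M a)" by blast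
  have Mgen: "\<And>a b w. M a (tAZ b w) = tAAZ (tAA a b) w" using lin_ext_gen[OF M[rule_format]] by simp
  have Mlin: "\<And>a. clinear (M a)" using M lin_ext_clinear by blast
  have tAAb: "bilin tAA" and tAAZb: "bilin tAAZ" using tAA tAAZ tensor_bilin by blast+
  have Madd: "M (a + a') v = M a v + M a' v" for a a' v
  proof (rule tensor_unique[OF tAZ Mlin[of "a + a'"] clinear_add_fun[OF Mlin[of a] Mlin[of a']]])
    fix x y show "M (a + a') (tAZ x y) = M a (tAZ x y) + M a' (tAZ x y)"
      by (simp add: Mgen bilin_add_left[OF tAAb] bilin_add_left[OF tAAZb])
  qed
  have Mscale: "M (cscale c a) v = cscale c (M a v)" for c a v
  proof -
    have cl: "clinear (\<lambda>v. cscale c (M a v))"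
      using Mlin[of a] by (simp add: clinear_def cscale_add_right cscale_cscale mult.commute)
    show ?thesis
    proof (rule tensor_unique[OF tAZ Mlin[of "cscale c a"] cl])
    fix x y show "M (cscale c a) (tAZ x y) = cscale c (M a (tAZ x y))"
      by (simp add: Mgen bilin_cscale_left[OF tAAb] bilin_cscale_left[OF tAAZb])
    qed
  qed
  have "bilin (\<lambda>a z. M a (al z))"
    unfolding bilin_def
  proof (intro conjI allI)
    fix z show "clinear (\<lambda>a. M a (al z))" by (simp add: clinear_def Madd Mscale)
  next
    fix a show "clinear (\<lambda>z. M a (al z))" by (rule clinear_comp[OF Mlin allin])
  qed
  then obtain D2 where D2: "lin_ext tAZ (\<lambda>a z. M a (al z)) D2"
    using lin_ext_exists[OF tAZ] by blast
  have coas: "\<And>z. D1 (al z) = D2 (al z)" using coassoc[OF D1 M D2] by blast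

  have main: "y = 0" if hy: "\<And>p. mu (p * y) = 0" for y
  proof -
    obtain m b z where bind: "cindep m b" and aly: "al y = (\<Sum>k<(m::nat). tAZ (b k) (z k))"
      using tensor_rep_indep_left[OF tAZ] by blast
    define K where "K w = (\<Sum>k<m. cscale (mu (w * z k)) (b k))" for w
    have Klin: "clinear K" unfolding K_def
      by (rule clinear_sum_scal, rule clinear_comp[OF mulin clinear_mult_right])
    obtain Om where Om: "lin_ext tAAZ (\<lambda>P w. H P * K w) Om"
      using lin_ext_exists[OF tAAZ bilin_mult[OF lin_ext_clinear[OF H] Klin]] by blast
    have Kzero: "K x = 0" for x
    proof -
      obtain n a xs where alx: "al x = (\<Sum>i<(n::nat). tAZ (a i) (xs i))"
        using tensor_span[OF tAZ] by blast
      have "\<forall>i. \<exists>nn. \<exists>X Y. al (xs i) = (\<Sum>j<(nn::nat). tAZ (X j) (Y j))"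
        using tensor_span[OF tAZ] by blast
      from choice[OF this] obtain NN where "\<forall>i. \<exists>X Y. al (xs i) = (\<Sum>j<(NN i::nat). tAZ (X j) (Y j))"
        by blast
      from choice[OF this] obtain XX where "\<forall>i. \<exists>Y. al (xs i) = (\<Sum>j<(NN i::nat). tAZ (XX i j) (Y j))"
        by blast
      from choice[OF this] obtain YY where alxs0: "\<forall>i. al (xs i) = (\<Sum>j<(NN i::nat). tAZ (XX i j) (YY i j))"
        by blast
      have alxs: "\<And>i. al (xs i) = (\<Sum>j<(NN i::nat). tAZ (XX i j) (YY i j))" using alxs0 by blast
      have inner: "(\<Sum>j<NN i. XX i j * K (YY i j)) = 0" for i
      proof -
        have "al (xs i * y) = (\<Sum>j<NN i. \<Sum>k<m. tAZ (XX i j * b k) (YY i j * z k))"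
          by (simp add: almult alxs aly sum_product tAZmult)
        hence "hm (al (xs i * y)) = (\<Sum>j<NN i. \<Sum>k<m. cscale (mu (YY i j * z k)) (XX i j * b k))"
          by (simp add: clinear_sum[OF lin_ext_clinear[OF hm]] lin_ext_gen[OF hm])
        also have "\<dots> = (\<Sum>j<NN i. XX i j * K (YY i j))"
          by (simp add: K_def sum_distrib_left cscale_mult_right)
        finally show ?thesis using hmal hy by simp
      qed
      have "Om (D1 (al x)) = K x"
      proof -
        have "D1 (al x) = (\<Sum>i<n. tAAZ (D (a i)) (xs i))" by (simp add: alx lin_ext_sum[OF D1])
        hence "Om (D1 (al x)) = (\<Sum>i<n. H (D (a i)) * K (xs i))" by (simp add: lin_ext_sum[OF Om])
        also have "\<dots> = (\<Sum>i<n. cscale (e (a i)) (K (xs i)))" by (simp add: HD cscale_mult_left)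
        also have "\<dots> = K (\<Sum>i<n. cscale (e (a i)) (xs i))"
          by (simp add: clinear_sum[OF Klin] clinear_cscale[OF Klin])
        also have "(\<Sum>i<n. cscale (e (a i)) (xs i)) = x" using heal[of x] by (simp add: alx lin_ext_sum[OF he])
        finally show ?thesis .
      qed
      moreover have "Om (D2 (al x)) = 0"
      proof -
        have "D2 (al x) = (\<Sum>i<n. M (a i) (al (xs i)))" by (simp add: alx lin_ext_sum[OF D2])
        also have "\<dots> = (\<Sum>i<n. \<Sum>j<NN i. tAAZ (tAA (a i) (XX i j)) (YY i j))"
          by (simp add: alxs lin_ext_sum[OF M[rule_format]])
        finally have "Om (D2 (al x)) = (\<Sum>i<n. \<Sum>j<NN i. H (tAA (a i) (XX i j)) * K (YY i j))"
          by (simp add: clinear_sum[OF lin_ext_clinear[OF Om]] lin_ext_gen[OF Om])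
        also have "\<dots> = (\<Sum>i<n. S (a i) * (\<Sum>j<NN i. XX i j * K (YY i j)))"
          by (simp add: lin_ext_gen[OF H] sum_distrib_left mult.assoc)
        also have "\<dots> = 0" using inner by simp
        finally show ?thesis .
      qed
      ultimately show ?thesis using coas by simp
    qed
    have zN: "\<And>k p. k < m \<Longrightarrow> mu (p * z k) = 0"
    proof -
      fix k p assume k: "k < m"
      have "(\<Sum>k<m. cscale (mu (p * z k)) (b k)) = 0" using Kzero[of p] by (simp add: K_def)
      moreover have "(\<Sum>i<m. cscale (mu (p * z i)) (b i)) = 0 \<longrightarrow> (\<forall>i<m. mu (p * z i) = 0)"
        using bind unfolding cindep_def by (rule spec)
      ultimately have "\<forall>i<m. mu (p * z i) = 0" by blast
      thus "mu (p * z k) = 0" using k by blast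
    qed
    obtain beta R where R: "\<forall>w. lin_ext tAZ (\<lambda>a z. tAZ a (z * w)) (R w)"
      and beta: "lin_ext tZZ (\<lambda>z w. R w (al z)) beta" and bij: "bij beta"
      using galois by blast
    have Rlin: "\<And>w. clinear (R w)" using R lin_ext_clinear by blast
    have Rgen: "\<And>w a z. R w (tAZ a z) = tAZ a (z * w)" using lin_ext_gen[OF R[rule_format]] by simp
    have betalin: "clinear beta" using lin_ext_clinear[OF beta] .
    have betagen: "\<And>p q. beta (tZZ p q) = R q (al p)" using lin_ext_gen[OF beta] .
    have R1: "R 1 v = v" for v
      by (rule tensor_unique[OF tAZ Rlin clinear_id]) (simp add: Rgen)
    have RR: "R w (R q v) = R (q * w) v" for w q v
      by (rule tensor_unique[OF tAZ clinear_comp[OF Rlin Rlin] Rlin]) (simp add: Rgen mult.assoc)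
    have "\<forall>w. \<exists>rw. lin_ext tZZ (\<lambda>p q. tZZ p (q * w)) rw"
      using lin_ext_exists[OF tZZ bilin_comp_right[OF tensor_bilin[OF tZZ] clinear_mult_right]] by blast
    from choice[OF this] obtain rho where rho: "\<forall>w. lin_ext tZZ (\<lambda>p q. tZZ p (q * w)) (rho w)" by blast
    have rholin: "\<And>w. clinear (rho w)" using rho lin_ext_clinear by blast
    have rhogen: "\<And>w p q. rho w (tZZ p q) = tZZ p (q * w)" using lin_ext_gen[OF rho[rule_format]] by simp
    obtain Psi where Psi: "lin_ext tZZ (\<lambda>p q. cscale (mu q) p) Psi"
      using lin_ext_exists[OF tZZ bilin_scal_right[OF mulin]] by blast
    have betarho: "beta (rho w P) = R w (beta P)" for w P
      by (rule tensor_unique[OF tZZ clinear_comp[OF betalin rholin] clinear_comp[OF Rlin betalin]])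
        (simp add: rhogen betagen RR)
    have bsurj: "\<And>v. beta (inv beta v) = v" using bij by (simp add: bij_is_surj surj_f_inv_f)
    have binj: "\<And>u v. beta u = beta v \<Longrightarrow> u = v" using bij by (simp add: bij_is_inj inj_eq)
    have invsum: "inv beta (\<Sum>k<m. vv k) = (\<Sum>k<m. inv beta (vv k))" for vv
      by (rule binj) (simp add: bsurj clinear_sum[OF betalin])
    have invgen: "inv beta (tAZ bb w) = rho w (inv beta (tAZ bb 1))" for bb w
      by (rule binj) (simp add: bsurj betarho Rgen)
    have Psizero: "Psi (rho (z k) P) = 0" if k: "k < m" for k P
      by (rule tensor_unique[OF tZZ clinear_comp[OF lin_ext_clinear[OF Psi] rholin] clinear_zero_fun])
        (simp add: rhogen lin_ext_gen[OF Psi] zN[OF k])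
    have "inv beta (al y) = tZZ y 1"
      by (rule binj) (simp add: bsurj betagen R1)
    hence "y = Psi (inv beta (al y))" by (simp add: lin_ext_gen[OF Psi] mu1 cscale_one)
    also have "\<dots> = (\<Sum>k<m. Psi (inv beta (tAZ (b k) (z k))))"
      by (simp add: aly invsum clinear_sum[OF lin_ext_clinear[OF Psi]])
    also have "\<dots> = (\<Sum>k<m. Psi (rho (z k) (inv beta (tAZ (b k) 1))))"
      by (rule sum.cong[OF refl]) (rule arg_cong[where f=Psi], rule invgen)
    also have "\<dots> = 0" by (simp add: Psizero)
    finally show ?thesis .
  qed
  show ?thesis
    unfolding faithful_functional_def
  proof (intro allI impI)
    fix y :: 'z assume ny: "y \<noteq> 0"
    show "0 < mu (cstar y * y)"
    proof (rule ccontr)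
      assume "\<not> 0 < mu (cstar y * y)"
      hence "mu (cstar y * y) = 0" using pos[of y] by (simp add: less_eq_complex_def less_complex_def complex_eq_iff)
      hence "\<And>p. mu (p * y) = 0" using cs_lemma[OF mulin pos] by blast
      thus False using main ny by blast
    qed
  qed
qed

end
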